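(* Let $s_1,\dots,s_M\in\mathbb{R}^2_-$ be distinct points. The functions $g_l$ and $h_{l,q}$, $l=1,\dots,M$, $q=1,2$, defined on $\widehat{\mathbb{S}}$ by $g_l(\alpha)=Q(\alpha)\mathrm{e}^{-\mathrm{i}k_-\mathrm{v}(\alpha)\cdot s_l}$ and $h_{l,q}(\alpha)=(\mathbf{e}_q\cdot\mathrm{v}(\alpha))Q(\alpha)\mathrm{e}^{-\mathrm{i}k_-\mathrm{v}(\alpha)\cdot s_l}$, are linearly independent.
   Context: $k_\pm>0$ are the wavenumbers of the upper and lower half-planes $\mathbb{R}^2_\pm=\{\pm x_2>0\}$. $\theta_c=\arccos(k_-/k_+)$ if $k_+>k_-$ and $\theta_c=0$ if $k_+<k_-$; $\widehat{\mathbb{S}}=\{(\cos\theta,\sin\theta):\theta\in(\pi+\theta_c,2\pi-\theta_c)\}$. With $\mu=k_+/k_-$ and $\alpha=(\alpha_1,\alpha_2)$: $\mathrm{v}(\alpha)=(\mu\alpha_1,\mathrm{sign}(\alpha_2)\sqrt{1-\mu^2\alpha_1^2})$, $Q(\alpha)=\frac{2\mu\alpha_2}{\mu\alpha_2+\mathrm{v}_2(\alpha)}$. $\mathbf{e}_1,\mathbf{e}_2$ is the standard basis of $\mathbb{R}^2$. The points $s_l$ are the centers of well-separated particles, hence distinct. *)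

theory Defs
  imports Complex_Main
begin

definition dot2 :: "real \<times> real \<Rightarrow> real \<times> real \<Rightarrow> real" where
  "dot2 a b = fst a * fst b + snd a * snd b"

definition theta_c :: "real \<Rightarrow> real \<Rightarrow> real" where
  "theta_c kp km = (if kp > km then arccos (km / kp) else 0)"

definition Shat :: "real \<Rightarrow> real \<Rightarrow> (real \<times> real) set" where
  "Shat kp km = {(cos \<theta>, sin \<theta>) | \<theta>. pi + theta_c kp km < \<theta> \<and> \<theta> < 2 * pi - theta_c kp km}"

definition vmap :: "real \<Rightarrow> real \<Rightarrow> real \<times> real \<Rightarrow> real \<times> real" where
  "vmap kp km \<alpha> = (let \<mu> = kp / km in
     (\<mu> * fst \<alpha>, sgn (snd \<alpha>) * sqrt (1 - \<mu>\<^sup>2 * (fst \<alpha>)\<^sup>2)))"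

definition Qfun :: "real \<Rightarrow> real \<Rightarrow> real \<times> real \<Rightarrow> real" where
  "Qfun kp km \<alpha> = (let \<mu> = kp / km in
     2 * \<mu> * snd \<alpha> / (\<mu> * snd \<alpha> + snd (vmap kp km \<alpha>)))"

definition gfun :: "real \<Rightarrow> real \<Rightarrow> real \<times> real \<Rightarrow> real \<times> real \<Rightarrow> complex" where
  "gfun kp km s \<alpha> = complex_of_real (Qfun kp km \<alpha>) *
     exp (- \<i> * complex_of_real (km * dot2 (vmap kp km \<alpha>) s))"

definition hfun :: "real \<Rightarrow> real \<Rightarrow> real \<times> real \<Rightarrow> nat \<Rightarrow> real \<times> real \<Rightarrow> complex" where
  "hfun kp km s q \<alpha> = complex_of_real
     ((if q = 1 then fst (vmap kp km \<alpha>) else snd (vmap kp km \<alpha>))) * gfun kp km s \<alpha>"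

end

theory Submission
  imports Defs "HOL-Complex_Analysis.Complex_Analysis" "HOL-Real_Asymp.Real_Asymp"
begin


lemma inv_of_real_lim: "((\<lambda>s::real. 1 / (of_real s :: complex)) \<longlongrightarrow> 0) at_top"
proof -
  have "((\<lambda>s::real. of_real (1 / s) :: complex) \<longlongrightarrow> of_real 0) at_top"
    by (intro tendsto_of_real) real_asymp
  then show ?thesis by simp
qed

lemma poly_lim0:
  fixes A B C :: complex
  assumes lim: "((\<lambda>s::real. A * of_real s ^ 2 + C * of_real s + B) \<longlongrightarrow> 0) at_top"
  shows "A = 0 \<and> C = 0 \<and> B = 0"
proof -
  let ?P = "\<lambda>s::real. A * of_real s ^ 2 + C * of_real s + B"
  let ?i = "\<lambda>s::real. 1 / (of_real s :: complex)"
  have ev: "eventually (\<lambda>s::real. s > 0) at_top" by (rule eventually_gt_at_top)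
  have i: "(?i \<longlongrightarrow> 0) at_top" by (rule inv_of_real_lim)
  have a1: "((\<lambda>s. ?P s * ?i s ^ 2) \<longlongrightarrow> 0) at_top"
    using tendsto_mult[OF lim tendsto_power[OF i, of 2]] by simp
  have a2: "((\<lambda>s. A + C * ?i s + B * ?i s ^ 2) \<longlongrightarrow> A + C * 0 + B * 0 ^ 2) at_top"
    by (intro tendsto_intros i)
  have "eventually (\<lambda>s. A + C * ?i s + B * ?i s ^ 2 = ?P s * ?i s ^ 2) at_top"
    using ev by eventually_elim (simp add: field_simps power2_eq_square)
  from Lim_transform_eventually[OF a2 this] have "((\<lambda>s. ?P s * ?i s ^ 2) \<longlongrightarrow> A) at_top"
    by simp
  with a1 have A0: "A = 0" using tendsto_unique trivial_limit_at_top_linorder by blast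
  have b1: "((\<lambda>s. ?P s * ?i s) \<longlongrightarrow> 0) at_top"
    using tendsto_mult[OF lim i] by simp
  have b2: "((\<lambda>s. C + B * ?i s) \<longlongrightarrow> C + B * 0) at_top"
    by (intro tendsto_intros i)
  have "eventually (\<lambda>s. C + B * ?i s = ?P s * ?i s) at_top"
    using ev by eventually_elim (simp add: A0 field_simps)
  from Lim_transform_eventually[OF b2 this] have "((\<lambda>s. ?P s * ?i s) \<longlongrightarrow> C) at_top"
    by simp
  with b1 have C0: "C = 0" using tendsto_unique trivial_limit_at_top_linorder by blast
  from lim have "((\<lambda>s::real. B) \<longlongrightarrow> 0) at_top" by (simp add: A0 C0)
  then have "B = 0" using tendsto_const tendsto_unique trivial_limit_at_top_linorder by blast
  with A0 C0 show ?thesis by simp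
qed

lemma decay_lim:
  fixes A B C d b :: complex
  assumes "Re d < 0"
  shows "((\<lambda>s::real. of_real s * (A * of_real s + C + B / of_real s) * exp (d * of_real s + b / of_real s)) \<longlongrightarrow> 0) at_top"
proof -
  have e2: "((\<lambda>s::real. of_real s ^ n * exp (d * of_real s)) \<longlongrightarrow> 0) at_top" for n
  proof (rule tendsto_norm_zero_cancel)
    have "((\<lambda>s::real. s ^ n * exp (Re d * s)) \<longlongrightarrow> 0) at_top"
      using assms by real_asymp
    moreover have "eventually (\<lambda>s::real. s ^ n * exp (Re d * s) = norm (of_real s ^ n * exp (d * of_real s))) at_top"
      using eventually_ge_at_top[of "0::real"] by eventually_elim (auto simp: norm_mult norm_power)
    ultimately show "((\<lambda>s::real. norm (of_real s ^ n * exp (d * of_real s))) \<longlongrightarrow> 0) at_top"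
      by (rule Lim_transform_eventually)
  qed
  have eb: "((\<lambda>s::real. exp (b * (1 / of_real s))) \<longlongrightarrow> exp (b * 0)) at_top"
    using inv_of_real_lim by (intro tendsto_intros)
  have "((\<lambda>s::real. (A * (of_real s ^ 2 * exp (d * of_real s)) + C * (of_real s ^ 1 * exp (d * of_real s)) + B * (of_real s ^ 0 * exp (d * of_real s))) * exp (b * (1 / of_real s))) \<longlongrightarrow> (A * 0 + C * 0 + B * 0) * exp (b * 0)) at_top"
    by (intro tendsto_intros e2 eb)
  moreover have "eventually (\<lambda>s::real. (A * (of_real s ^ 2 * exp (d * of_real s)) + C * (of_real s ^ 1 * exp (d * of_real s)) + B * (of_real s ^ 0 * exp (d * of_real s))) * exp (b * (1 / of_real s)) = of_real s * (A * of_real s + C + B / of_real s) * exp (d * of_real s + b / of_real s)) at_top"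
    using eventually_gt_at_top[of 0] by eventually_elim (simp only: exp_add, simp add: field_simps power2_eq_square)
  ultimately show ?thesis using Lim_transform_eventually by fastforce
qed
lemma asym:
  fixes L :: "nat set" and A B C al be :: "nat \<Rightarrow> complex"
  assumes fin: "finite L" and inj: "inj_on (\<lambda>l. Re (al l)) L"
    and H: "\<And>s::real. s > 0 \<Longrightarrow> (\<Sum>l\<in>L. (A l * of_real s + C l + B l / of_real s) * exp (al l * of_real s + be l / of_real s)) = 0"
  shows "\<forall>l\<in>L. A l = 0 \<and> C l = 0 \<and> B l = 0"
proof (rule ccontr)
  assume neg: "\<not> (\<forall>l\<in>L. A l = 0 \<and> C l = 0 \<and> B l = 0)"
  define L' where "L' = {l\<in>L. \<not>(A l = 0 \<and> C l = 0 \<and> B l = 0)}"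
  have fin': "finite L'" "L' \<noteq> {}" "L' \<subseteq> L" using fin neg by (auto simp: L'_def)
  define m where "m = Max ((\<lambda>l. Re (al l)) ` L')"
  obtain l0 where l0: "l0 \<in> L'" "Re (al l0) = m"
  proof -
    have "m \<in> (\<lambda>l. Re (al l)) ` L'" unfolding m_def using fin' by (intro Max_in) auto
    then show ?thesis using that by auto
  qed
  have lt: "Re (al l - al l0) < 0" if "l \<in> L' - {l0}" for l
  proof -
    have "Re (al l) \<le> m" unfolding m_def using that fin' by (intro Max_ge) auto
    moreover have "Re (al l) \<noteq> Re (al l0)" using inj that l0 fin'(3) unfolding inj_on_def by blast
    ultimately show ?thesis using l0 by simp
  qed
  define f where "f l s = (A l * of_real s + C l + B l / of_real s) * exp (al l * of_real s + be l / of_real s)" for l s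
  define T where "T l s = of_real s * (A l * of_real s + C l + B l / of_real s) * exp ((al l - al l0) * of_real s + be l / of_real s)" for l s
  have sumT: "(\<Sum>l\<in>L'. T l s) = 0" if "s > 0" for s :: real
  proof -
    have "(\<Sum>l\<in>L'. f l s) = (\<Sum>l\<in>L. f l s)"
      using fin fin' by (intro sum.mono_neutral_left) (auto simp: L'_def f_def)
    also have "\<dots> = 0" using H[OF that] by (simp add: f_def)
    finally have z: "(\<Sum>l\<in>L'. f l s) = 0" .
    have "(\<Sum>l\<in>L'. T l s) = (\<Sum>l\<in>L'. (of_real s * exp (- (al l0 * of_real s))) * f l s)"
      by (intro sum.cong refl) (simp add: T_def f_def algebra_simps flip: exp_add)
    also have "\<dots> = 0" by (simp add: z flip: sum_distrib_left)
    finally show ?thesis .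
  qed
  have rest: "((\<lambda>s. \<Sum>l\<in>L'-{l0}. T l s) \<longlongrightarrow> 0) at_top"
    unfolding T_def by (intro tendsto_null_sum decay_lim lt)
  have "eventually (\<lambda>s. - (\<Sum>l\<in>L'-{l0}. T l s) = T l0 s) at_top"
    using eventually_gt_at_top[of "0::real"]
  proof eventually_elim
    case (elim s)
    show ?case using sumT[OF elim] sum.remove[OF fin'(1) l0(1), of "\<lambda>l. T l s"]
      by (simp add: add_eq_0_iff)
  qed
  from Lim_transform_eventually[OF tendsto_minus[OF rest] this]
  have T0: "((\<lambda>s. T l0 s) \<longlongrightarrow> 0) at_top" by simp
  have eb: "((\<lambda>s::real. exp (- (be l0 * (1 / of_real s)))) \<longlongrightarrow> exp (- (be l0 * 0))) at_top"
    using inv_of_real_lim by (intro tendsto_intros)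
  have "((\<lambda>s. T l0 s * exp (- (be l0 * (1 / of_real s)))) \<longlongrightarrow> 0 * exp (- (be l0 * 0))) at_top"
    by (intro tendsto_intros T0 eb)
  moreover have "eventually (\<lambda>s. T l0 s * exp (- (be l0 * (1 / of_real s))) = A l0 * of_real s ^ 2 + C l0 * of_real s + B l0) at_top"
    using eventually_gt_at_top[of "0::real"]
  proof eventually_elim
    case (elim s)
    have "T l0 s * exp (- (be l0 * (1 / of_real s))) = of_real s * (A l0 * of_real s + C l0 + B l0 / of_real s) * (exp (be l0 / of_real s) * exp (- (be l0 * (1 / of_real s))))"
      by (simp add: T_def)
    also have "exp (be l0 / of_real s) * exp (- (be l0 * (1 / of_real s))) = 1"
      by (simp flip: exp_add)
    finally have "T l0 s * exp (- (be l0 * (1 / of_real s))) = of_real s * (A l0 * of_real s + C l0 + B l0 / of_real s)" by simp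
    also have "\<dots> = A l0 * of_real s ^ 2 + C l0 * of_real s + B l0"
      using elim by (simp add: field_simps power2_eq_square)
    finally show ?case .
  qed
  ultimately have "((\<lambda>s::real. A l0 * of_real s ^ 2 + C l0 * of_real s + B l0) \<longlongrightarrow> 0) at_top"
    using Lim_transform_eventually by fastforce
  from poly_lim0[OF this] l0(1) show False by (simp add: L'_def)
qed


lemma geo:
  fixes kp km \<phi> :: real
  assumes kp: "kp > 0" and km: "km > 0" and "pi < \<phi>" "\<phi> < 2*pi" "\<bar>cos \<phi>\<bar> < 1" "\<bar>cos \<phi>\<bar> < kp/km"
  shows "\<exists>\<alpha>\<in>Shat kp km. vmap kp km \<alpha> = (cos \<phi>, sin \<phi>) \<and> Qfun kp km \<alpha> \<noteq> 0"
proof -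
  define \<mu> where "\<mu> = kp / km"
  have mu: "\<mu> > 0" using kp km by (simp add: \<mu>_def)
  define a where "a = cos \<phi> / \<mu>"
  have a1: "\<bar>a\<bar> < 1" using assms mu by (simp add: a_def \<mu>_def abs_divide abs_mult field_simps)
  have a2: "\<bar>a\<bar> < 1 / \<mu>" using assms mu by (simp add: a_def abs_divide divide_strict_right_mono)
  have sneg: "sin \<phi> < 0"
  proof -
    have "sin (\<phi> - pi) > 0" using assms by (intro sin_gt_zero) auto
    then show ?thesis by (simp add: sin_diff)
  qed
  define \<theta> where "\<theta> = 2*pi - arccos a"
  have ca: "cos \<theta> = a" using a1 by (simp add: \<theta>_def cos_diff cos_arccos)
  have sa: "sin \<theta> = - sqrt (1 - a\<^sup>2)" using a1 by (simp add: \<theta>_def sin_diff sin_arccos)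
  have sq: "sqrt (1 - a\<^sup>2) > 0" using a1 by (simp add: abs_square_less_1)
  have th: "pi + theta_c kp km < \<theta> \<and> \<theta> < 2 * pi - theta_c kp km"
  proof (cases "kp > km")
    case True
    then have tc: "theta_c kp km = arccos (1 / \<mu>)" by (simp add: theta_c_def \<mu>_def)
    have m1: "1 / \<mu> < 1" using True km by (simp add: \<mu>_def)
    have b: "-1 < a" "a < 1" "-(1/\<mu>) < a" "a < 1/\<mu>" using a1 a2 by (auto simp: abs_less_iff)
    have "arccos (1 / \<mu>) < arccos a" by (rule arccos_less_arccos) (use b m1 in linarith)+
    moreover have "arccos a < arccos (- (1 / \<mu>))" by (rule arccos_less_arccos) (use b m1 in linarith)+
    moreover have "arccos (- (1 / \<mu>)) = pi - arccos (1/\<mu>)" using b m1 by (intro arccos_minus) linarith+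
    ultimately show ?thesis by (simp add: tc \<theta>_def)
  next
    case False
    then have "theta_c kp km = 0" by (simp add: theta_c_def)
    with arccos_lt_bounded[of a] a1 show ?thesis by (simp add: \<theta>_def)
  qed
  define \<alpha> where "\<alpha> = (a, - sqrt (1 - a\<^sup>2))"
  have inS: "\<alpha> \<in> Shat kp km" unfolding Shat_def \<alpha>_def using th ca sa by force
  have "1 - \<mu>\<^sup>2 * a\<^sup>2 = (sin \<phi>)\<^sup>2" using mu by (simp add: a_def power_divide sin_squared_eq)
  then have "sqrt (1 - \<mu>\<^sup>2 * a\<^sup>2) = - sin \<phi>" using sneg by simp
  then have v: "vmap kp km \<alpha> = (cos \<phi>, sin \<phi>)"
    using sq mu by (simp add: vmap_def \<alpha>_def Let_def \<mu>_def[symmetric] a_def)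
  have "Qfun kp km \<alpha> \<noteq> 0"
  proof -
    have "\<mu> * (- sqrt (1 - a\<^sup>2)) < 0" using mu sq by (simp add: mult_pos_pos)
    then have "\<mu> * (- sqrt (1 - a\<^sup>2)) + sin \<phi> < 0" using sneg by linarith
    then show ?thesis using mu sq v
      by (simp add: Qfun_def Let_def \<mu>_def[symmetric] \<alpha>_def)
  qed
  with inS v show ?thesis by blast
qed


lemma sum12: "(\<Sum>q::nat=1..2. f q) = f 1 + f (2::nat)"
  by (simp add: numeral_2_eq_2)

lemma term_id:
  fixes w u c d1 d2 x y k :: complex and s :: real and z :: complex
  assumes w: "w \<noteq> 0" and s: "s > 0" and u: "exp (\<i> * z) = w / of_real s"
  shows "(c + d1 * cos z + d2 * sin z) * exp (- \<i> * k * (cos z * x + sin z * y))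
    = (((d1 + \<i> * d2) / (2*w)) * of_real s + c + (w * (d1 - \<i> * d2) / 2) / of_real s)
      * exp ((- \<i> * k * (x + \<i> * y) / (2*w)) * of_real s + (- \<i> * k * w * (x - \<i> * y) / 2) / of_real s)"
proof -
  have u2: "exp (- (\<i> * z)) = of_real s / w" using u w s by (simp add: exp_minus)
  have cz: "cos z = (w / of_real s + of_real s / w) / 2" by (simp add: cos_exp_eq u u2)
  have sz: "sin z = (w / of_real s - of_real s / w) / (2 * \<i>)" by (simp add: sin_exp_eq u u2)
  have sne: "(of_real s :: complex) \<noteq> 0" using s by simp
  have e1: "c + d1 * cos z + d2 * sin z = ((d1 + \<i> * d2) / (2*w)) * of_real s + c + (w * (d1 - \<i> * d2) / 2) / of_real s"
    unfolding cz sz using w sne by (simp add: field_simps; (simp add: algebra_simps)?)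
  have e2: "- \<i> * k * (cos z * x + sin z * y) = (- \<i> * k * (x + \<i> * y) / (2*w)) * of_real s + (- \<i> * k * w * (x - \<i> * y) / 2) / of_real s"
    unfolding cz sz using w sne by (simp add: field_simps; (simp add: algebra_simps)?)
  show ?thesis by (simp only: e1 e2)
qed

theorem lemmaA1:
  fixes kp km :: real and M :: nat and s :: "nat \<Rightarrow> real \<times> real"
    and c :: "nat \<Rightarrow> complex" and d :: "nat \<Rightarrow> nat \<Rightarrow> complex"
  assumes "kp > 0" and "km > 0" and "kp \<noteq> km"
    and "\<forall>l\<in>{1..M}. snd (s l) < 0"
    and "inj_on s {1..M}"
    and "\<forall>\<alpha>\<in>Shat kp km.
           (\<Sum>l=1..M. c l * gfun kp km (s l) \<alpha>
              + (\<Sum>q=1..2. d l q * hfun kp km (s l) q \<alpha>)) = 0"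
  shows "(\<forall>l\<in>{1..M}. c l = 0) \<and> (\<forall>l\<in>{1..M}. \<forall>q\<in>{1..2}. d l q = 0)"
proof -
  note kp = assms(1) and km = assms(2) and inj = assms(5) and hyp = assms(6)
  define x where "x l = fst (s l)" for l
  define y where "y l = snd (s l)" for l
  define F where "F z = (\<Sum>l=1..M. (c l + d l 1 * cos z + d l 2 * sin z) *
     exp (- \<i> * of_real km * (cos z * of_real (x l) + sin z * of_real (y l))))" for z
  define U where "U = {\<phi>. pi < \<phi> \<and> \<phi> < 2*pi \<and> \<bar>cos \<phi>\<bar> < 1 \<and> \<bar>cos \<phi>\<bar> < kp/km}"
  have FU: "F (of_real \<phi>) = 0" if phiU: "\<phi> \<in> U" for \<phi>
  proof -
    obtain \<alpha> where \<alpha>: "\<alpha> \<in> Shat kp km" "vmap kp km \<alpha> = (cos \<phi>, sin \<phi>)" "Qfun kp km \<alpha> \<noteq> 0"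
      using geo[OF kp km] phiU unfolding U_def by blast
    have "(\<Sum>l=1..M. c l * gfun kp km (s l) \<alpha> + (\<Sum>q=1..2. d l q * hfun kp km (s l) q \<alpha>))
       = of_real (Qfun kp km \<alpha>) * F (of_real \<phi>)"
      unfolding F_def sum_distrib_left sum12
      by (intro sum.cong refl) (simp add: sum12 gfun_def hfun_def \<alpha>(2) dot2_def x_def y_def algebra_simps cos_of_real sin_of_real)
    with hyp \<alpha> show ?thesis by simp
  qed
  have "F z = 0" for z
  proof (rule analytic_continuation[where f = F and w = z and S = "UNIV :: complex set" and U = "(of_real ` U :: complex set)" and \<xi> = "(of_real (3*pi/2) :: complex)"])
    show "F holomorphic_on UNIV" unfolding F_def by (intro holomorphic_intros)
    show "of_real (3*pi/2) islimpt (of_real ` U :: complex set)"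
      unfolding islimpt_approachable
    proof (intro allI impI)
      fix e :: real assume e: "e > 0"
      define mm where "mm = min e (min 1 (min (kp/km) (pi/2)))"
      have q: "kp/km > 0" using kp km by simp
      have mm: "mm > 0" "mm \<le> e" "mm \<le> 1" "mm \<le> kp/km" "mm \<le> pi/2" using e q pi_gt_zero by (auto simp: mm_def min_le_iff_disj simp del: divide_le_eq_numeral1 le_divide_eq_numeral1)
      define h where "h = mm / 2"
      have h: "h > 0" "h < e" "h < 1" "h < kp/km" "h < pi/2" using mm unfolding h_def by (auto simp del: divide_le_eq_numeral1 le_divide_eq_numeral1 less_divide_eq_numeral1 divide_less_eq_numeral1)
      have "3*pi/2 = 3/2*pi" by simp
      then have "cos (3*pi/2 + h) = sin h" by (simp only: cos_add cos_3over2_pi sin_3over2_pi; simp)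
      then have "\<bar>cos (3*pi/2 + h)\<bar> \<le> h" using abs_sin_x_le_abs_x[of h] h by simp
      then have hU: "3*pi/2 + h \<in> U" using h by (auto simp: U_def)
      have d: "dist (of_real (3*pi/2 + h) :: complex) (of_real (3*pi/2)) = h"
        using h by (simp add: dist_norm)
      have mem: "(of_real (3*pi/2 + h) :: complex) \<in> of_real ` U" using hU by (rule imageI)
      have ne: "(of_real (3*pi/2 + h) :: complex) \<noteq> of_real (3*pi/2)" using h by simp
      show "\<exists>x'\<in>(of_real ` U :: complex set). x' \<noteq> of_real (3*pi/2) \<and> dist x' (of_real (3*pi/2)) < e"
        using mem ne d h by metis
    qed
  qed (use FU in auto)
  note F0 = this
  define Bd where "Bd = (\<Union>l\<in>{1..M}. \<Union>m\<in>{1..M}-{l}. {\<tau>::real. y l - \<tau> * x l = y m - \<tau> * x m})"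
  have "finite Bd" unfolding Bd_def
  proof (intro finite_UN_I)
    fix l m assume l: "l \<in> {1..M}" and m: "m \<in> {1..M}-{l}"
    have "s l \<noteq> s m" using inj l m unfolding inj_on_def by blast
    then have xy: "x l \<noteq> x m \<or> y l \<noteq> y m" by (auto simp: x_def y_def prod_eq_iff)
    have "{\<tau>::real. y l - \<tau> * x l = y m - \<tau> * x m} \<subseteq> {(y l - y m) / (x l - x m)}"
    proof
      fix \<tau> assume "\<tau> \<in> {\<tau>::real. y l - \<tau> * x l = y m - \<tau> * x m}"
      then have e: "y l - y m = \<tau> * (x l - x m)" by (simp add: algebra_simps)
      with xy have "x l - x m \<noteq> 0" by auto
      with e show "\<tau> \<in> {(y l - y m) / (x l - x m)}" by (simp add: field_simps)
    qed
    then show "finite {\<tau>::real. y l - \<tau> * x l = y m - \<tau> * x m}" by (rule finite_subset) simp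
  qed simp_all
  then obtain t where t: "t \<notin> Bd" using ex_new_if_finite[OF infinite_UNIV_char_0] by blast
  define w where "w = 1 + \<i> * complex_of_real t"
  have w: "w \<noteq> 0" by (simp add: w_def complex_eq_iff)
  define A where "A l = (d l 1 + \<i> * d l 2) / (2*w)" for l
  define B where "B l = w * (d l 1 - \<i> * d l 2) / 2" for l
  define al where "al l = - \<i> * of_real km * (of_real (x l) + \<i> * of_real (y l)) / (2*w)" for l
  define be where "be l = - \<i> * of_real km * w * (of_real (x l) - \<i> * of_real (y l)) / 2" for l
  have real: "Re (al l) = km * (y l - t * x l) / (2 * (1 + t\<^sup>2))" for l
  proof -
    have p: "0 < 1 + t * t" by (simp add: add_pos_nonneg)
    have p2: "4 + t * (t * 4) = 2 * (2 + t * (t * 2))" by simp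
    have p3: "2 + t * (t * 2) \<noteq> 0" using p by simp
    show ?thesis
      by (simp add: al_def w_def Re_divide field_simps power2_eq_square) (simp only: p2, use p3 in \<open>simp add: field_simps\<close>)
  qed
  have injal: "inj_on (\<lambda>l. Re (al l)) {1..M}"
  proof (rule inj_onI)
    fix l m assume l: "l \<in> {1..M}" and m: "m \<in> {1..M}" and eq: "Re (al l) = Re (al m)"
    have pos: "2 * (1 + t\<^sup>2) > 0" by (simp add: add_pos_nonneg)
    from eq have "km * (y l - t * x l) = km * (y m - t * x m)" using pos by (simp add: real)
    then have "y l - t * x l = y m - t * x m" using km by simp
    then show "l = m" using t l m unfolding Bd_def by blast
  qed
  have H: "(\<Sum>l\<in>{1..M}. (A l * of_real r + c l + B l / of_real r) * exp (al l * of_real r + be l / of_real r)) = 0"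
    if r: "r > 0" for r :: real
  proof -
    define z where "z = - \<i> * Ln (w / of_real r)"
    have wr: "w / of_real r \<noteq> 0" using w r by simp
    have u: "exp (\<i> * z) = w / of_real r" using wr by (simp add: z_def)
    have "F z = (\<Sum>l\<in>{1..M}. (A l * of_real r + c l + B l / of_real r) * exp (al l * of_real r + be l / of_real r))"
      unfolding F_def A_def B_def al_def be_def
      by (intro sum.cong refl term_id[OF w r u])
    with F0 show ?thesis by simp
  qed
  have all0: "\<forall>l\<in>{1..M}. A l = 0 \<and> c l = 0 \<and> B l = 0"
    by (rule asym[OF _ injal H]) simp
  show ?thesis
  proof (intro conjI ballI)
    fix l assume l: "l \<in> {1..M}"
    then show "c l = 0" using all0 by blast
    have AB: "A l = 0" "B l = 0" using all0 l by auto
    have e1: "d l 1 + \<i> * d l 2 = 0" using AB(1) w unfolding A_def by simp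
    have e2: "d l 1 - \<i> * d l 2 = 0" using AB(2) w unfolding B_def by simp
    have "2 * d l 1 = 0" using e1 e2 by (simp add: algebra_simps)
    then have d1: "d l 1 = 0" by simp
    then have "\<i> * d l 2 = 0" using e1 by simp
    then have d12: "d l 1 = 0" "d l 2 = 0" using d1 by auto
    fix q :: nat assume "q \<in> {1..2}"
    then have "q = 1 \<or> q = 2" by auto
    with d12 show "d l q = 0" by auto
  qed
qed

end
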